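(* The following density statements hold, both with respect to the norm $\|\cdot\|$: \begin{itemize} \item the invertible elements of $B_0$ are dense in $B_0$; \item the selfadjoint (real valued) invertible elements of $B_0$ are dense in the set of all selfadjoint elements of $B_0$. \end{itemize}
   Context: Let $\mathbb{N} = \{1, 2, \dots\}$ and let $B = C_0(\mathbb{N})^+ = \{a \in \ell^\infty(\mathbb{N}) : \lim_{n\to\infty} a(n) \text{ exists}\}$, with the supremum norm $\|\cdot\|_\infty$ and pointwise operations. Let $\lambda(a) = \lim_{n\to\infty} a(n)$ for $a \in B$. Define \[ B_0 = \{a \in B : \lim_{n\to\infty} n[a(n) - \lambda(a)] \text{ exists}\}. \] For $a \in B_0$, set \[ \|a\|_\omega = \sup_{n \in \mathbb{N}} n|a(n) - \lambda(a)| \quad\text{and}\quad \|a\| = \|a\|_\infty + \|a\|_\omega . \] $B_0$ is a unital Banach *-algebra in $\|\cdot\|$, with pointwise operations and the involution $a^*(n) = \overline{a(n)}$. *)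

theory Defs
  imports "HOL-Analysis.Analysis"
begin

text \<open>Elements of B_0 are represented as sequences a :: nat => complex, where the
  value a k represents the paper's a(k+1) (index shift, so that index 0 corresponds
  to the paper's n = 1). Hence the weight n becomes real (Suc k).\<close>

definition lam :: "(nat \<Rightarrow> complex) \<Rightarrow> complex" where
  "lam a = lim a"

definition B0 :: "(nat \<Rightarrow> complex) set" where
  "B0 = {a. convergent a \<and> convergent (\<lambda>k. of_nat (Suc k) * (a k - lam a))}"

definition norm_inf :: "(nat \<Rightarrow> complex) \<Rightarrow> real" where
  "norm_inf a = (SUP k. cmod (a k))"

definition norm_om :: "(nat \<Rightarrow> complex) \<Rightarrow> real" where
  "norm_om a = (SUP k. real (Suc k) * cmod (a k - lam a))"

definition B0norm :: "(nat \<Rightarrow> complex) \<Rightarrow> real" where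
  "B0norm a = norm_inf a + norm_om a"

definition B0star :: "(nat \<Rightarrow> complex) \<Rightarrow> (nat \<Rightarrow> complex)" where
  "B0star a = (\<lambda>k. cnj (a k))"

definition B0_selfadjoint :: "(nat \<Rightarrow> complex) \<Rightarrow> bool" where
  "B0_selfadjoint a \<longleftrightarrow> B0star a = a"

definition B0_invertible :: "(nat \<Rightarrow> complex) \<Rightarrow> bool" where
  "B0_invertible a \<longleftrightarrow> a \<in> B0 \<and> (\<exists>b\<in>B0. (\<lambda>k. a k * b k) = (\<lambda>k. 1) \<and> (\<lambda>k. b k * a k) = (\<lambda>k. 1))"

end

theory Submission
  imports Defs
begin

lemma lam_eq: "X \<longlonglongrightarrow> L \<Longrightarrow> lam X = L"
  unfolding lam_def by (rule limI)

lemma conv_lam: "convergent X \<Longrightarrow> X \<longlonglongrightarrow> lam X"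
  unfolding lam_def by (simp add: convergent_LIMSEQ_iff)

lemma shift_good:
  fixes a :: "nat \<Rightarrow> complex" and d :: real
  assumes aB: "a \<in> B0" and nz: "\<And>k. a k + of_real d \<noteq> 0" and nzL: "lam a + of_real d \<noteq> 0"
  shows "B0_invertible (\<lambda>k. a k + of_real d) \<and> B0norm (\<lambda>k. a k - (a k + of_real d)) = \<bar>d\<bar>"
proof -
  define L where "L = lam a"
  define M where "M = L + of_real d"
  define b where "b = (\<lambda>k. a k + complex_of_real d)"
  have ca: "convergent a" and cw: "convergent (\<lambda>k. of_nat (Suc k) * (a k - L))"
    using aB by (auto simp: B0_def L_def)
  have aL: "a \<longlonglongrightarrow> L" using conv_lam[OF ca] L_def by simp
  have bM: "b \<longlonglongrightarrow> M" unfolding b_def M_def by (intro tendsto_add aL tendsto_const)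
  have lb: "lam b = M" using lam_eq[OF bM] .
  have MN: "M \<noteq> 0" using nzL by (simp add: M_def L_def)
  have bnz: "\<And>k. b k \<noteq> 0" using nz by (simp add: b_def)
  have bB: "b \<in> B0"
  proof -
    have "(\<lambda>k. of_nat (Suc k) * (b k - lam b)) = (\<lambda>k. of_nat (Suc k) * (a k - L))"
      using lb by (simp add: b_def M_def)
    then show ?thesis using cw bM unfolding B0_def convergent_def by auto
  qed
  define c where "c = (\<lambda>k. 1 / b k)"
  have cM: "c \<longlonglongrightarrow> 1 / M" unfolding c_def by (intro tendsto_divide tendsto_const bM MN)
  have lc: "lam c = 1 / M" using lam_eq[OF cM] .
  obtain W where W: "(\<lambda>k. of_nat (Suc k) * (a k - L)) \<longlonglongrightarrow> W" using cw by (auto simp: convergent_def)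
  have eq: "(\<lambda>k. of_nat (Suc k) * (c k - lam c)) = (\<lambda>k. - (of_nat (Suc k) * (a k - L)) / (b k * M))"
  proof
    fix k
    have hb: "b k = M + a k - L" by (simp add: b_def M_def)
    show "of_nat (Suc k) * (c k - lam c) = - (of_nat (Suc k) * (a k - L)) / (b k * M)"
      unfolding lc using bnz[of k] MN unfolding c_def by (simp add: field_simps) (simp add: hb algebra_simps)
  qed
  have "(\<lambda>k. - (of_nat (Suc k) * (a k - L)) / (b k * M)) \<longlonglongrightarrow> - W / (M * M)"
    by (intro tendsto_divide tendsto_minus W tendsto_mult bM tendsto_const) (simp add: MN)
  then have "(\<lambda>k. of_nat (Suc k) * (c k - lam c)) \<longlonglongrightarrow> - W / (M * M)" by (simp only: eq)
  then have cB: "c \<in> B0" using cM unfolding B0_def convergent_def by blast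
  have inv: "B0_invertible b"
    unfolding B0_invertible_def using bB cB bnz by (intro conjI bexI[of _ c]) (auto simp: c_def)
  have diff: "(\<lambda>k. a k - (a k + of_real d)) = (\<lambda>k. - complex_of_real d)" by simp
  have ld: "lam (\<lambda>k. - complex_of_real d) = - complex_of_real d" by (rule lam_eq) simp
  have "norm_inf (\<lambda>k. - complex_of_real d) = \<bar>d\<bar>" by (simp add: norm_inf_def)
  moreover have "norm_om (\<lambda>k. - complex_of_real d) = 0" by (simp add: norm_om_def ld)
  ultimately have "B0norm (\<lambda>k. a k - (a k + of_real d)) = \<bar>d\<bar>"
    by (simp add: B0norm_def diff)
  then show ?thesis using inv by (simp add: b_def)
qed

lemma exists_d:
  fixes a :: "nat \<Rightarrow> complex" and e :: real
  assumes "e > 0"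
  shows "\<exists>d. 0 < d \<and> d < e \<and> (\<forall>k. a k + of_real d \<noteq> 0) \<and> lam a + of_real d \<noteq> 0"
proof -
  define S where "S = range (\<lambda>k. - Re (a k)) \<union> {- Re (lam a)}"
  have cS: "countable S" by (simp add: S_def)
  have "uncountable {0<..<e}" using assms by (simp add: uncountable_open_interval)
  then have "\<not> {0<..<e} \<subseteq> S" using cS countable_subset by blast
  then obtain d where d: "d \<in> {0<..<e}" "d \<notin> S" by blast
  have "\<forall>k. a k + of_real d \<noteq> 0"
  proof
    fix k show "a k + of_real d \<noteq> 0"
    proof
      assume "a k + of_real d = 0"
      then have "Re (a k) + d = 0" by (metis complex_eq_iff plus_complex.sel(1) Re_complex_of_real zero_complex.sel(1))
      then have "d = - Re (a k)" by simp
      then show False using d(2) by (auto simp: S_def)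
    qed
  qed
  moreover have "lam a + of_real d \<noteq> 0"
  proof
    assume "lam a + of_real d = 0"
    then have "Re (lam a) + d = 0" by (metis plus_complex.sel(1) Re_complex_of_real zero_complex.sel(1))
    then show False using d(2) by (auto simp: S_def)
  qed
  ultimately show ?thesis using d(1) by auto
qed

theorem proposition4p11:
  shows "(\<forall>a\<in>B0. \<forall>\<epsilon>>0. \<exists>b. B0_invertible b \<and> B0norm (\<lambda>k. a k - b k) < \<epsilon>)
       \<and> (\<forall>a\<in>B0. B0_selfadjoint a \<longrightarrow> (\<forall>\<epsilon>>0. \<exists>b. B0_selfadjoint b \<and> B0_invertible b
              \<and> B0norm (\<lambda>k. a k - b k) < \<epsilon>))"
proof (intro conjI ballI allI impI)
  fix a :: "nat \<Rightarrow> complex" and e :: real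
  assume aB: "a \<in> B0" and e: "e > 0"
  obtain d where d: "0 < d" "d < e" "\<forall>k. a k + of_real d \<noteq> 0" "lam a + of_real d \<noteq> 0"
    using exists_d[OF e] by blast
  have g: "B0_invertible (\<lambda>k. a k + of_real d) \<and> B0norm (\<lambda>k. a k - (a k + of_real d)) = \<bar>d\<bar>"
    using shift_good[OF aB] d by blast
  then show "\<exists>b. B0_invertible b \<and> B0norm (\<lambda>k. a k - b k) < e"
    using d by (intro exI[of _ "\<lambda>k. a k + of_real d"]) auto
  {
    assume sa: "B0_selfadjoint a"
    have "B0_selfadjoint (\<lambda>k. a k + of_real d)"
    proof -
      have "\<And>k. cnj (a k) = a k" using sa unfolding B0_selfadjoint_def B0star_def by metis
      then show ?thesis unfolding B0_selfadjoint_def B0star_def by simp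
    qed
    then show "\<exists>b. B0_selfadjoint b \<and> B0_invertible b \<and> B0norm (\<lambda>k. a k - b k) < e"
      using g d by (intro exI[of _ "\<lambda>k. a k + of_real d"]) auto
  }
qed

end
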